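(* If $\mathfrak{F}=(X,R,Q)$ is a finite $\mathsf{MIPC}$-frame, then there is a finite $\mathsf{MS4}$-frame $\mathfrak{G}$ validating $\mathsf{LKur}=\mathsf{MS4}+\Box\forall\Diamond\Box p\to\Diamond\forall p$ such that $\mathfrak{F}$ is isomorphic to the skeleton $\rho\mathfrak{G}$.
   Context: An $\mathsf{MIPC}$-frame is $(X,R,Q)$ with $R$ a partial order, $Q$ a quasi-order, $R\subseteq Q$, and $xQy$ implying $\exists z$ with $xRz$ and $zE_Qy$, where $xE_Qy$ iff $xQy$ and $yQx$. An isomorphism of $\mathsf{MIPC}$-frames is a bijection preserving and reflecting $R$ and $Q$. An $\mathsf{MS4}$-frame is $(Y,R,E)$ with $R$ a quasi-order, $E$ an equivalence relation, such that $xEy$, $yRz$ imply $\exists u$ with $xRu$, $uEz$. $\mathsf{MS4}$ is the smallest set of formulas in the classical bimodal language $\mathcal{L}_{\Box\forall}$ containing all classical tautologies, the $\mathsf{S4}$ axioms for $\Box$, the $\mathsf{S5}$ axioms for $\forall$, and $\Box\forall p\to\forall\Box p$, closed under modus ponens, substitution, $\Box$- and $\forall$-necessitation; $\Diamond=\neg\Box\neg$. Formulas are evaluated on $\mathsf{MS4}$-frames with $\Box$ via $R$ and $\forall$ via $E$. Skeleton of $\mathfrak{G}=(Y,R,E)$: with $xE_Ry$ iff $xRy$ and $yRx$, $X'=Y/E_R$ with quotient map $\pi$; $Q=E\circ R$ ($xQy$ iff $\exists z$: $xRz$, $zEy$); $\rho\mathfrak{G}=(X',R',Q')$ with $\pi(x)R'\pi(y)$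 iff $xRy$ and $\pi(x)Q'\pi(y)$ iff $xQy$. *)

theory Defs
  imports Main
begin

definition mipc_frame :: "'a set \<Rightarrow> 'a rel \<Rightarrow> 'a rel \<Rightarrow> bool" where
  "mipc_frame X R Q \<longleftrightarrow>
     R \<subseteq> X \<times> X \<and> Q \<subseteq> X \<times> X \<and>
     (\<forall>x\<in>X. (x, x) \<in> R) \<and> trans R \<and> antisym R \<and>
     (\<forall>x\<in>X. (x, x) \<in> Q) \<and> trans Q \<and>
     R \<subseteq> Q \<and>
     (\<forall>x y. (x, y) \<in> Q \<longrightarrow> (\<exists>z. (x, z) \<in> R \<and> (z, y) \<in> Q \<and> (y, z) \<in> Q))"

definition ms4_frame :: "'b set \<Rightarrow> 'b rel \<Rightarrow> 'b rel \<Rightarrow> bool" where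
  "ms4_frame Y R E \<longleftrightarrow>
     R \<subseteq> Y \<times> Y \<and> (\<forall>x\<in>Y. (x, x) \<in> R) \<and> trans R \<and>
     equiv Y E \<and>
     (\<forall>x y z. (x, y) \<in> E \<longrightarrow> (y, z) \<in> R \<longrightarrow> (\<exists>u. (x, u) \<in> R \<and> (u, z) \<in> E))"

definition mipc_iso :: "('a \<Rightarrow> 'c) \<Rightarrow> 'a set \<Rightarrow> 'a rel \<Rightarrow> 'a rel \<Rightarrow> 'c set \<Rightarrow> 'c rel \<Rightarrow> 'c rel \<Rightarrow> bool" where
  "mipc_iso f X R Q X' R' Q' \<longleftrightarrow>
     bij_betw f X X' \<and>
     (\<forall>x\<in>X. \<forall>y\<in>X. ((x, y) \<in> R \<longleftrightarrow> (f x, f y) \<in> R') \<and> ((x, y) \<in> Q \<longleftrightarrow> (f x, f y) \<in> Q'))"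

definition ER :: "'b rel \<Rightarrow> 'b rel" where
  "ER R = {(x, y). (x, y) \<in> R \<and> (y, x) \<in> R}"

definition skel_proj :: "'b set \<Rightarrow> 'b rel \<Rightarrow> 'b \<Rightarrow> 'b set" where
  "skel_proj Y R x = ER R `` {x}"

definition skel_carrier :: "'b set \<Rightarrow> 'b rel \<Rightarrow> 'b set set" where
  "skel_carrier Y R = Y // ER R"

text \<open>Q = E o R in the paper's notation: x Q y iff exists z with x R z and z E y.\<close>
definition skel_Q0 :: "'b rel \<Rightarrow> 'b rel \<Rightarrow> 'b rel" where
  "skel_Q0 R E = {(x, y). \<exists>z. (x, z) \<in> R \<and> (z, y) \<in> E}"

definition skel_R :: "'b set \<Rightarrow> 'b rel \<Rightarrow> 'b set rel" where
  "skel_R Y R = {(skel_proj Y R x, skel_proj Y R y) | x y. x \<in> Y \<and> y \<in> Y \<and> (x, y) \<in> R}"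

definition skel_Q :: "'b set \<Rightarrow> 'b rel \<Rightarrow> 'b rel \<Rightarrow> 'b set rel" where
  "skel_Q Y R E = {(skel_proj Y R x, skel_proj Y R y) | x y. x \<in> Y \<and> y \<in> Y \<and> (x, y) \<in> skel_Q0 R E}"

datatype fm = Var nat | Bot | Imp fm fm | Box fm | Univ fm

definition Neg :: "fm \<Rightarrow> fm" where "Neg p = Imp p Bot"
definition Dia :: "fm \<Rightarrow> fm" where "Dia p = Neg (Box (Neg p))"
definition Exi :: "fm \<Rightarrow> fm" where "Exi p = Neg (Univ (Neg p))"

text \<open>Propositional evaluation treating modalised subformulas as atoms;
  classical tautologies of the bimodal language are the formulas true under
  every such evaluation (i.e. substitution instances of propositional tautologies).\<close>
fun peval :: "(fm \<Rightarrow> bool) \<Rightarrow> fm \<Rightarrow> bool" where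
  "peval v (Var n) = v (Var n)"
| "peval v Bot = False"
| "peval v (Imp p q) = (peval v p \<longrightarrow> peval v q)"
| "peval v (Box p) = v (Box p)"
| "peval v (Univ p) = v (Univ p)"

definition tautology :: "fm \<Rightarrow> bool" where
  "tautology p \<longleftrightarrow> (\<forall>v. peval v p)"

fun subst :: "(nat \<Rightarrow> fm) \<Rightarrow> fm \<Rightarrow> fm" where
  "subst s (Var n) = s n"
| "subst s Bot = Bot"
| "subst s (Imp p q) = Imp (subst s p) (subst s q)"
| "subst s (Box p) = Box (subst s p)"
| "subst s (Univ p) = Univ (subst s p)"

abbreviation "P0 \<equiv> Var 0"
abbreviation "P1 \<equiv> Var 1"

inductive_set LKur :: "fm set" where
  taut: "tautology p \<Longrightarrow> p \<in> LKur"
| boxK: "Imp (Box (Imp P0 P1)) (Imp (Box P0) (Box P1)) \<in> LKur"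
| boxT: "Imp (Box P0) P0 \<in> LKur"
| box4: "Imp (Box P0) (Box (Box P0)) \<in> LKur"
| allK: "Imp (Univ (Imp P0 P1)) (Imp (Univ P0) (Univ P1)) \<in> LKur"
| allT: "Imp (Univ P0) P0 \<in> LKur"
| all4: "Imp (Univ P0) (Univ (Univ P0)) \<in> LKur"
| all5: "Imp (Exi P0) (Univ (Exi P0)) \<in> LKur"
| lcomm: "Imp (Box (Univ P0)) (Univ (Box P0)) \<in> LKur"
| kur: "Imp (Box (Univ (Dia (Box P0)))) (Dia (Univ P0)) \<in> LKur"
| mp: "p \<in> LKur \<Longrightarrow> Imp p q \<in> LKur \<Longrightarrow> q \<in> LKur"
| sub: "p \<in> LKur \<Longrightarrow> subst s p \<in> LKur"
| nec_box: "p \<in> LKur \<Longrightarrow> Box p \<in> LKur"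
| nec_all: "p \<in> LKur \<Longrightarrow> Univ p \<in> LKur"

fun sat :: "'b rel \<Rightarrow> 'b rel \<Rightarrow> (nat \<Rightarrow> 'b set) \<Rightarrow> 'b \<Rightarrow> fm \<Rightarrow> bool" where
  "sat R E V x (Var n) = (x \<in> V n)"
| "sat R E V x Bot = False"
| "sat R E V x (Imp p q) = (sat R E V x p \<longrightarrow> sat R E V x q)"
| "sat R E V x (Box p) = (\<forall>y. (x, y) \<in> R \<longrightarrow> sat R E V y p)"
| "sat R E V x (Univ p) = (\<forall>y. (x, y) \<in> E \<longrightarrow> sat R E V y p)"

definition frame_valid :: "'b set \<Rightarrow> 'b rel \<Rightarrow> 'b rel \<Rightarrow> fm \<Rightarrow> bool" where
  "frame_valid Y R E p \<longleftrightarrow> (\<forall>V. \<forall>x\<in>Y. sat R E V x p)"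

definition validates_logic :: "'b set \<Rightarrow> 'b rel \<Rightarrow> 'b rel \<Rightarrow> fm set \<Rightarrow> bool" where
  "validates_logic Y R E L \<longleftrightarrow> (\<forall>p\<in>L. frame_valid Y R E p)"

end

theory Submission
  imports Defs
begin


lemma peval_sat: "peval (\<lambda>q. sat S E V x q) p = sat S E V x p"
  by (induction p) auto

lemma sat_subst: "sat S E V x (subst s p) = sat S E (\<lambda>n. {y. sat S E V y (s n)}) x p"
  by (induction p arbitrary: x) auto

lemma valid_LKur:
  assumes ms: "ms4_frame Y S E"
    and mx: "\<And>a. a \<in> Y \<Longrightarrow> \<exists>b. (a,b) \<in> S \<and> (\<forall>c d. (b,c) \<in> E \<longrightarrow> (c,d) \<in> S \<longrightarrow> (d,c) \<in> S)"
  shows "validates_logic Y S E LKur"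
  unfolding validates_logic_def
proof
  fix p assume "p \<in> LKur"
  from ms have SY: "S \<subseteq> Y \<times> Y" and Sr: "\<forall>x\<in>Y. (x,x) \<in> S" and St: "trans S"
    and Eq: "equiv Y E" and lc: "\<forall>x y z. (x, y) \<in> E \<longrightarrow> (y, z) \<in> S \<longrightarrow> (\<exists>u. (x, u) \<in> S \<and> (u, z) \<in> E)"
    unfolding ms4_frame_def by auto
  from Eq have EY: "E \<subseteq> Y \<times> Y" and Er: "\<forall>x\<in>Y. (x,x) \<in> E" and Es: "sym E" and Et: "trans E"
    unfolding equiv_def refl_on_def by auto
  show "frame_valid Y S E p" using \<open>p \<in> LKur\<close>
  proof (induction p rule: LKur.induct)
    case (taut p) then show ?case unfolding frame_valid_def tautology_def
    proof (intro allI ballI)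
      fix V x assume "\<forall>v. peval v p"
      then have "peval (\<lambda>q. sat S E V x q) p" by blast
      then show "sat S E V x p" by (simp only: peval_sat)
    qed
  next
    case boxK then show ?case unfolding frame_valid_def by auto
  next
    case boxT then show ?case unfolding frame_valid_def using Sr by auto
  next
    case box4 then show ?case unfolding frame_valid_def using St by (auto dest: transD)
  next
    case allK then show ?case unfolding frame_valid_def by auto
  next
    case allT then show ?case unfolding frame_valid_def using Er by auto
  next
    case all4 then show ?case unfolding frame_valid_def using Et by (auto dest: transD)
  next
    case all5 then show ?case unfolding frame_valid_def Exi_def Neg_def using Et Es
      by (auto dest: symD transD)
  next
    case lcomm then show ?case unfolding frame_valid_def using lc by fastforce
  next
    case kur
    show ?case unfolding frame_valid_def
    proof (intro allI ballI)
      fix V x assume x: "x \<in> Y"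
      obtain b where xb: "(x,b) \<in> S" and bm: "\<forall>c d. (b,c) \<in> E \<longrightarrow> (c,d) \<in> S \<longrightarrow> (d,c) \<in> S"
        using mx[OF x] by blast
      have "sat S E V x (Dia (Univ P0))" if h: "sat S E V x (Box (Univ (Dia (Box P0))))"
      proof -
        have "\<forall>c. (b,c) \<in> E \<longrightarrow> sat S E V c P0"
        proof (intro allI impI)
          fix c assume bc: "(b,c) \<in> E"
          from h xb bc have "sat S E V c (Dia (Box P0))" by auto
          then obtain d where cd: "(c,d) \<in> S" and "sat S E V d (Box P0)"
            unfolding Dia_def Neg_def by auto
          moreover have "(d,c) \<in> S" using bm bc cd by blast
          ultimately show "sat S E V c P0" by auto
        qed
        then show ?thesis using xb unfolding Dia_def Neg_def by auto
      qed
      then show "sat S E V x (Imp (Box (Univ (Dia (Box P0)))) (Dia (Univ P0)))" by simp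
    qed
  next
    case (mp p q) then show ?case unfolding frame_valid_def by auto
  next
    case (sub p s) then show ?case unfolding frame_valid_def by (simp add: sat_subst)
  next
    case (nec_box p) then show ?case unfolding frame_valid_def using SY by auto
  next
    case (nec_all p) then show ?case unfolding frame_valid_def using EY by auto
  qed
qed



lemma exists_max:
  assumes fin: "finite X" and RX: "R \<subseteq> X \<times> X" and tr: "trans R" and an: "antisym R"
    and that: "\<forall>x\<in>X. (x,x) \<in> R"
  shows "x \<in> X \<Longrightarrow> \<exists>w. (x,w) \<in> R \<and> (\<forall>u. (w,u) \<in> R \<longrightarrow> u = w)"
proof (induction x rule: measure_induct_rule[where f="\<lambda>x. card {u. (x,u) \<in> R}"])
  case (less x)
  show ?case
  proof (cases "\<forall>u. (x,u) \<in> R \<longrightarrow> u = x")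
    case True then show ?thesis using that less.prems by blast
  next
    case False
    then obtain u where xu: "(x,u) \<in> R" and ux: "u \<noteq> x" by blast
    have sub: "{v. (u,v) \<in> R} \<subset> {v. (x,v) \<in> R}"
    proof
      show "{v. (u,v) \<in> R} \<subseteq> {v. (x,v) \<in> R}" using xu tr by (auto dest: transD)
      have "(u,x) \<notin> R" using xu ux an by (auto dest: antisymD)
      moreover have "(x,x) \<in> R" using that less.prems by blast
      ultimately show "{v. (u,v) \<in> R} \<noteq> {v. (x,v) \<in> R}" by blast
    qed
    have "finite {v. (x,v) \<in> R}" using fin RX by (auto intro: finite_subset)
    then have "card {v. (u,v) \<in> R} < card {v. (x,v) \<in> R}" using sub psubset_card_mono by blast
    moreover have "u \<in> X" using xu RX by auto
    ultimately obtain w where "(u,w) \<in> R" "\<forall>v. (w,v) \<in> R \<longrightarrow> v = w" using less.IH by blast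
    then show ?thesis using xu tr by (auto dest: transD)
  qed
qed

lemma main_con:
  fixes X :: "'a set" and pt :: "nat \<Rightarrow> 'a" and idx :: "nat \<Rightarrow> nat"
  assumes fin: "finite X" and mf: "mipc_frame X R Q"
    and M_def: "M = {x\<in>X. \<forall>u. (x,u) \<in> R \<longrightarrow> u = x}"
    and finY: "finite Y"
    and P1: "\<forall>a\<in>Y. pt a \<in> X"
    and P2: "\<forall>x\<in>X. \<exists>a\<in>Y. pt a = x \<and> idx a = 0"
    and P3: "\<forall>x\<in>M. \<exists>a\<in>Y. pt a = x \<and> idx a = 1"
    and P4: "\<forall>a\<in>Y. idx a = 0 \<or> (idx a = 1 \<and> pt a \<in> M)"
    and S_def: "S = {(a,b). a \<in> Y \<and> b \<in> Y \<and> (pt a, pt b) \<in> R}"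
    and E_def: "E = {(a,b). a \<in> Y \<and> b \<in> Y \<and> idx a = idx b \<and> (pt a, pt b) \<in> Q \<and> (pt b, pt a) \<in> Q}"
  shows "ms4_frame Y S E \<and> validates_logic Y S E LKur \<and>
           (\<exists>f. mipc_iso f X R Q (skel_carrier Y S) (skel_R Y S) (skel_Q Y S E))"
proof -
  from mf have RX: "R \<subseteq> X \<times> X" and QX: "Q \<subseteq> X \<times> X" and Rr: "\<forall>x\<in>X. (x, x) \<in> R"
    and Rt: "trans R" and Ra: "antisym R" and Qr: "\<forall>x\<in>X. (x, x) \<in> Q" and Qt: "trans Q"
    and RQ: "R \<subseteq> Q"
    and mc: "\<forall>x y. (x, y) \<in> Q \<longrightarrow> (\<exists>z. (x, z) \<in> R \<and> (z, y) \<in> Q \<and> (y, z) \<in> Q)"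
    unfolding mipc_frame_def by auto
  have maxex: "\<And>x. x \<in> X \<Longrightarrow> \<exists>w. (x,w) \<in> R \<and> (\<forall>u. (w,u) \<in> R \<longrightarrow> u = w)"
    using exists_max[OF fin RX Rt Ra Rr] by blast
  have inM: "\<And>w. w \<in> X \<Longrightarrow> (\<forall>u. (w,u) \<in> R \<longrightarrow> u = w) \<Longrightarrow> w \<in> M" using M_def by blast
  have Mmax: "\<And>w u. w \<in> M \<Longrightarrow> (w,u) \<in> R \<Longrightarrow> u = w" using M_def by blast
  have lift: "\<exists>v. (x,v) \<in> R \<and> (v,y) \<in> Q \<and> (y,v) \<in> Q \<and> (y \<in> M \<longrightarrow> v \<in> M)"
    if xy: "(x,y) \<in> Q" for x y
  proof -
    obtain v where xv: "(x,v) \<in> R" and vy: "(v,y) \<in> Q" and yv: "(y,v) \<in> Q" using mc xy by blast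
    show ?thesis
    proof (cases "y \<in> M")
      case False then show ?thesis using xv vy yv by blast
    next
      case True
      have vX: "v \<in> X" using xv RX by auto
      obtain w where vw: "(v,w) \<in> R" and wm: "\<forall>u. (w,u) \<in> R \<longrightarrow> u = w" using maxex[OF vX] by blast
      have wX: "w \<in> X" using vw RX by auto
      have "(y,w) \<in> Q" using transD[OF Qt yv] vw RQ by blast
      then obtain y' where yy': "(y,y') \<in> R" and "(y',w) \<in> Q" "(w,y') \<in> Q" using mc by blast
      then have "(w,y) \<in> Q" using Mmax[OF True yy'] by simp
      moreover have "(y,w) \<in> Q" by fact
      moreover have "(x,w) \<in> R" using transD[OF Rt xv vw] .
      ultimately show ?thesis using inM[OF wX wm] by (intro exI[of _ w]) simp
    qed
  qed
  have SY: "S \<subseteq> Y \<times> Y" unfolding S_def by blast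
  have Sr: "\<forall>x\<in>Y. (x,x) \<in> S" using S_def P1 Rr by auto
  have St: "trans S"
  proof (rule transI)
    fix a b c assume "(a,b) \<in> S" "(b,c) \<in> S"
    then show "(a,c) \<in> S" unfolding S_def using transD[OF Rt, of "pt a" "pt b" "pt c"] by blast
  qed
  have Eeq: "equiv Y E"
  proof (rule equivI)
    show "refl_on Y E" unfolding refl_on_def E_def using P1 Qr by auto
    show "sym E" unfolding sym_def E_def by auto
    show "E \<subseteq> Y \<times> Y" unfolding E_def by blast
    show "trans E"
    proof (rule transI)
      fix a b c assume "(a,b) \<in> E" "(b,c) \<in> E"
      then show "(a,c) \<in> E" unfolding E_def
        using transD[OF Qt, of "pt a" "pt b" "pt c"] transD[OF Qt, of "pt c" "pt b" "pt a"] by auto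
    qed
  qed
  have lc: "\<forall>x y z. (x, y) \<in> E \<longrightarrow> (y, z) \<in> S \<longrightarrow> (\<exists>u. (x, u) \<in> S \<and> (u, z) \<in> E)"
  proof (intro allI impI)
    fix a b c assume ab: "(a,b) \<in> E" and bc: "(b,c) \<in> S"
    have aY: "a \<in> Y" and cY: "c \<in> Y" using ab bc E_def S_def by auto
    have "(pt a, pt b) \<in> Q" "(pt b, pt c) \<in> R" using ab bc E_def S_def by auto
    then have "(pt a, pt c) \<in> Q" using RQ transD[OF Qt] by blast
    then obtain v where av: "(pt a, v) \<in> R" and vc: "(v, pt c) \<in> Q" "(pt c, v) \<in> Q"
      and vM: "pt c \<in> M \<longrightarrow> v \<in> M" using lift by blast
    have vX: "v \<in> X" using av RX by auto
    have "\<exists>u\<in>Y. pt u = v \<and> idx u = idx c"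
    proof (cases "idx c = 0")
      case True then show ?thesis using P2 vX by auto
    next
      case False then have "idx c = 1" "pt c \<in> M" using P4 cY by auto
      then show ?thesis using P3 vM by auto
    qed
    then obtain u where uY: "u \<in> Y" and uv: "pt u = v" and ui: "idx u = idx c" by blast
    show "\<exists>u. (a, u) \<in> S \<and> (u, c) \<in> E"
      using uY uv ui aY cY av vc unfolding S_def E_def by auto
  qed
  have ms: "ms4_frame Y S E" unfolding ms4_frame_def using SY Sr St Eeq lc by blast
  have mx: "\<exists>b. (a,b) \<in> S \<and> (\<forall>c d. (b,c) \<in> E \<longrightarrow> (c,d) \<in> S \<longrightarrow> (d,c) \<in> S)" if aY: "a \<in> Y" for a
  proof -
    have "pt a \<in> X" using P1 aY by auto
    then obtain w where aw: "(pt a, w) \<in> R" and wm: "\<forall>u. (w,u) \<in> R \<longrightarrow> u = w" using maxex by blast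
    have wM: "w \<in> M" using inM wm aw RX by auto
    obtain b where bY: "b \<in> Y" and bw: "pt b = w" and bi: "idx b = 1" using P3 wM by blast
    have "(a,b) \<in> S" using aY bY bw aw S_def by auto
    moreover have "(d,c) \<in> S" if bc: "(b,c) \<in> E" and cd: "(c,d) \<in> S" for c d
    proof -
      have "idx c = 1" "c \<in> Y" "d \<in> Y" using bc cd bi E_def S_def by auto
      then have "pt c \<in> M" using P4 by auto
      moreover have "(pt c, pt d) \<in> R" using cd S_def by auto
      ultimately have "pt d = pt c" using Mmax by blast
      then show ?thesis using \<open>c \<in> Y\<close> \<open>d \<in> Y\<close> P1 Rr S_def by auto
    qed
    ultimately show ?thesis by (intro exI[of _ b] conjI allI impI)
  qed
  have val: "validates_logic Y S E LKur" by (rule valid_LKur[OF ms mx])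
  have proj: "skel_proj Y S a = {b \<in> Y. pt b = pt a}" if aY: "a \<in> Y" for a
  proof -
    have "(pt a, pt b) \<in> R \<and> (pt b, pt a) \<in> R \<longleftrightarrow> pt b = pt a" if "b \<in> Y" for b
      using Ra P1 Rr aY that by (auto dest: antisymD)
    then show ?thesis unfolding skel_proj_def ER_def S_def using aY by auto
  qed
  define f where "f x = {b \<in> Y. pt b = x}" for x
  have fp: "skel_proj Y S a = f (pt a)" if "a \<in> Y" for a using proj[OF that] f_def by simp
  have fne: "\<exists>a\<in>Y. pt a = x" if "x \<in> X" for x using P2 that by blast
  have carr: "skel_carrier Y S = f ` X"
  proof
    show "skel_carrier Y S \<subseteq> f ` X"
    proof
      fix C assume "C \<in> skel_carrier Y S"
      then obtain a where a: "a \<in> Y" "C = ER S `` {a}" unfolding skel_carrier_def quotient_def by blast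
      then have "C = f (pt a)" using fp[OF a(1)] unfolding skel_proj_def by simp
      then show "C \<in> f ` X" using P1 a(1) by blast
    qed
    show "f ` X \<subseteq> skel_carrier Y S"
    proof
      fix C assume "C \<in> f ` X"
      then obtain x where x: "x \<in> X" "C = f x" by blast
      obtain a where "a \<in> Y" "pt a = x" using fne[OF x(1)] by blast
      then have "C = ER S `` {a}" using fp x unfolding skel_proj_def by simp
      then show "C \<in> skel_carrier Y S" unfolding skel_carrier_def quotient_def
        using \<open>a \<in> Y\<close> by blast
    qed
  qed
  have finj: "inj_on f X"
  proof (rule inj_onI)
    fix x y assume "x \<in> X" "y \<in> X" "f x = f y"
    obtain a where "a \<in> Y" "pt a = x" using fne[OF \<open>x \<in> X\<close>] by blast
    then have "a \<in> f y" using \<open>f x = f y\<close> f_def by auto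
    then show "x = y" using \<open>pt a = x\<close> f_def by auto
  qed
  have fpt: "\<And>a x. a \<in> Y \<Longrightarrow> x \<in> X \<Longrightarrow> f (pt a) = f x \<longleftrightarrow> pt a = x"
    using inj_on_eq_iff[OF finj] P1 by blast
  have isoR: "(x, y) \<in> R \<longleftrightarrow> (f x, f y) \<in> skel_R Y S" if xyX: "x \<in> X" "y \<in> X" for x y
  proof
    assume "(x,y) \<in> R"
    obtain a where "a \<in> Y" "pt a = x" using fne xyX(1) by blast
    obtain b where "b \<in> Y" "pt b = y" using fne xyX(2) by blast
    have "(a,b) \<in> S" unfolding S_def using \<open>a \<in> Y\<close> \<open>b \<in> Y\<close> \<open>pt a = x\<close> \<open>pt b = y\<close> \<open>(x,y) \<in> R\<close> by simp
    then have "(skel_proj Y S a, skel_proj Y S b) \<in> skel_R Y S" unfolding skel_R_def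
      using \<open>a \<in> Y\<close> \<open>b \<in> Y\<close> by blast
    then show "(f x, f y) \<in> skel_R Y S" using fp \<open>a \<in> Y\<close> \<open>b \<in> Y\<close> \<open>pt a = x\<close> \<open>pt b = y\<close> by simp
  next
    assume "(f x, f y) \<in> skel_R Y S"
    then obtain a b where ab: "a \<in> Y" "b \<in> Y" "(a, b) \<in> S" "f x = skel_proj Y S a" "f y = skel_proj Y S b"
      unfolding skel_R_def by auto
    then have "(pt a, pt b) \<in> R" "f x = f (pt a)" "f y = f (pt b)" using fp[OF ab(1)] fp[OF ab(2)]
      unfolding S_def by auto
    note ab = ab(1,2) this
    then have "pt a = x" "pt b = y" using fpt[of a x] fpt[of b y] xyX by auto
    then show "(x,y) \<in> R" using \<open>(pt a, pt b) \<in> R\<close> by simp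
  qed
  have isoQ: "(x, y) \<in> Q \<longleftrightarrow> (f x, f y) \<in> skel_Q Y S E" if xyX: "x \<in> X" "y \<in> X" for x y
  proof
    assume "(x,y) \<in> Q"
    then obtain v where xv: "(x,v) \<in> R" and vy: "(v,y) \<in> Q" "(y,v) \<in> Q" using mc by blast
    have vX: "v \<in> X" using xv RX by auto
    obtain a where "a \<in> Y" "pt a = x" "idx a = 0" using P2 xyX(1) by blast
    obtain b where "b \<in> Y" "pt b = y" "idx b = 0" using P2 xyX(2) by blast
    obtain c where "c \<in> Y" "pt c = v" "idx c = 0" using P2 vX by blast
    have "(a,c) \<in> S" unfolding S_def using \<open>a \<in> Y\<close> \<open>c \<in> Y\<close> \<open>pt a = x\<close> \<open>pt c = v\<close> xv by simp
    moreover have "(c,b) \<in> E" unfolding E_def using \<open>b \<in> Y\<close> \<open>c \<in> Y\<close> \<open>pt b = y\<close> \<open>pt c = v\<close> \<open>idx b = 0\<close> \<open>idx c = 0\<close> vy by simp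
    ultimately have "(a,b) \<in> skel_Q0 S E" unfolding skel_Q0_def by blast
    then have "(skel_proj Y S a, skel_proj Y S b) \<in> skel_Q Y S E" unfolding skel_Q_def
      using \<open>a \<in> Y\<close> \<open>b \<in> Y\<close> by blast
    then show "(f x, f y) \<in> skel_Q Y S E" using fp \<open>a \<in> Y\<close> \<open>b \<in> Y\<close> \<open>pt a = x\<close> \<open>pt b = y\<close> by simp
  next
    assume "(f x, f y) \<in> skel_Q Y S E"
    then obtain a b where ab: "a \<in> Y" "b \<in> Y" "(a,b) \<in> skel_Q0 S E" "f x = f (pt a)" "f y = f (pt b)"
      unfolding skel_Q_def using fp by auto
    then have "pt a = x" "pt b = y" using fpt[of a x] fpt[of b y] xyX by auto
    from ab(3) obtain c where "(a,c) \<in> S" "(c,b) \<in> E" unfolding skel_Q0_def by auto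
    then have "(pt a, pt c) \<in> R" "(pt c, pt b) \<in> Q" unfolding S_def E_def by auto
    then have "(pt a, pt b) \<in> Q" using RQ transD[OF Qt] by blast
    then show "(x,y) \<in> Q" using \<open>pt a = x\<close> \<open>pt b = y\<close> by simp
  qed
  have "mipc_iso f X R Q (skel_carrier Y S) (skel_R Y S) (skel_Q Y S E)"
    unfolding mipc_iso_def using carr finj isoR isoQ by (simp add: bij_betw_def)
  then show ?thesis using ms val by blast
qed


theorem lemma5p1:
  fixes X :: "'a set" and R Q :: "'a rel"
  assumes "finite X" and "mipc_frame X R Q"
  shows "\<exists>(Y :: nat set) S E. finite Y \<and> ms4_frame Y S E \<and> validates_logic Y S E LKur \<and>
           (\<exists>f. mipc_iso f X R Q (skel_carrier Y S) (skel_R Y S) (skel_Q Y S E))"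
proof -
  obtain h :: "'a \<Rightarrow> nat" where hi: "inj_on h X"
    using finite_imp_inj_to_nat_seg[OF assms(1)] by blast
  define M where "M = {x\<in>X. \<forall>u. (x,u) \<in> R \<longrightarrow> u = x}"
  define Y where "Y = (\<lambda>x. 2 * h x) ` X \<union> (\<lambda>x. 2 * h x + 1) ` M"
  define pt where "pt n = inv_into X h (n div 2)" for n
  define idx where "idx n = n mod (2::nat)" for n
  have MX: "M \<subseteq> X" using M_def by blast
  have pt0: "pt (2 * h x) = x" if "x \<in> X" for x using hi that unfolding pt_def by simp
  have pt1: "pt (2 * h x + 1) = x" if "x \<in> X" for x using hi that unfolding pt_def by simp
  have finY: "finite Y" unfolding Y_def using assms(1) MX finite_subset by blast
  have P1: "\<forall>a\<in>Y. pt a \<in> X" unfolding Y_def using pt0 pt1 MX by auto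
  have P2: "\<forall>x\<in>X. \<exists>a\<in>Y. pt a = x \<and> idx a = 0"
  proof
    fix x assume x: "x \<in> X"
    show "\<exists>a\<in>Y. pt a = x \<and> idx a = 0"
      by (rule bexI[of _ "2 * h x"]) (use x pt0 in \<open>auto simp: Y_def idx_def\<close>)
  qed
  have P3: "\<forall>x\<in>M. \<exists>a\<in>Y. pt a = x \<and> idx a = 1"
  proof
    fix x assume x: "x \<in> M"
    show "\<exists>a\<in>Y. pt a = x \<and> idx a = 1"
      by (rule bexI[of _ "2 * h x + 1"]) (use x MX pt1 in \<open>auto simp: Y_def idx_def\<close>)
  qed
  have P4: "\<forall>a\<in>Y. idx a = 0 \<or> (idx a = 1 \<and> pt a \<in> M)"
    unfolding Y_def idx_def using pt1 MX by auto
  define S where "S = {(a,b). a \<in> Y \<and> b \<in> Y \<and> (pt a, pt b) \<in> R}"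
  define E where "E = {(a,b). a \<in> Y \<and> b \<in> Y \<and> idx a = idx b \<and> (pt a, pt b) \<in> Q \<and> (pt b, pt a) \<in> Q}"
  have "ms4_frame Y S E \<and> validates_logic Y S E LKur \<and>
           (\<exists>f. mipc_iso f X R Q (skel_carrier Y S) (skel_R Y S) (skel_Q Y S E))"
    by (rule main_con[OF assms(1,2) M_def finY P1 P2 P3 P4 S_def E_def])
  then show ?thesis using finY by blast
qed

end
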